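(* Let $\vec w=(w_1,\dots,w_{N})$ be a weight tensor with $N=N_{\vec w}$ elements and initial values $\vec w^{(1)}$, quantized with a static (fixed over iterations) clipping scalar $s$ with $0<s<\max_j|w^{(1)}_j|$. Suppose the weights are trained by gradient-based updates $w_j^{(i+1)}=w_j^{(i)}-\eta_i\,\Delta^{(\mathrm{PWL})}w_j^{(i)}$, where the piece-wise linear (PWL) gradient estimate satisfies $\Delta^{(\mathrm{PWL})}w_j^{(i)}=G_j^{(i)}\cdot\mathbb{1}_{\{|w_j^{(i)}|\le s\}}$ for some upstream gradient values $G_j^{(i)}$. Let $\tilde N^{(i)}_{\vec w}=\#\{j:|w^{(i)}_j|\le s\}$ be the number of parameters learned (receiving a possibly nonzero update) at iteration $i$. Then for every iteration $i$, $$N_{\vec w}>\tilde N^{(i)}_{\vec w}\ge\tilde N^{(i+1)}_{\vec w}.$$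
   Context: The PWL estimator replaces the derivative of the clipped quantizer $\mathbb{Q}(x)=\mathrm{clip}(s\,2^{1-B}\mathrm{round}(x2^{B-1}/s),-s,s)$ by $\mathbb{1}_{\{x\in[-s,s]\}}$, so weights whose magnitude exceeds $s$ receive zero gradient. *)

theory Defs
  imports Complex_Main
begin

definition n_learned :: "(nat \<Rightarrow> nat \<Rightarrow> real) \<Rightarrow> real \<Rightarrow> nat \<Rightarrow> nat \<Rightarrow> nat" where
  "n_learned w s N i = card {j. j < N \<and> \<bar>w i j\<bar> \<le> s}"

end

theory Submission
  imports Defs
begin

theorem proposition2:
  fixes w :: "nat \<Rightarrow> nat \<Rightarrow> real" and G :: "nat \<Rightarrow> nat \<Rightarrow> real"
    and \<eta> :: "nat \<Rightarrow> real" and s :: real and N i :: nat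
  assumes "0 < N"
    and "0 < s"
    and "s < Max {\<bar>w 1 j\<bar> | j. j < N}"
    and "\<And>i j. 1 \<le> i \<Longrightarrow> j < N \<Longrightarrow>
           w (i + 1) j = w i j - \<eta> i * (G i j * (if \<bar>w i j\<bar> \<le> s then 1 else 0))"
    and "1 \<le> i"
  shows "N > n_learned w s N i \<and> n_learned w s N i \<ge> n_learned w s N (i + 1)"
proof -
  have stay: "w (k+1) j = w k j" if "1 \<le> k" "j < N" "\<bar>w k j\<bar> > s" for k j
    using assms(4)[OF that(1,2)] that(3) by simp
  have fin: "finite {\<bar>w 1 j\<bar> | j. j < N}" by simp
  have ne: "{\<bar>w 1 j\<bar> | j. j < N} \<noteq> {}" using assms(1) by auto
  obtain j0 where j0: "j0 < N" "\<bar>w 1 j0\<bar> = Max {\<bar>w 1 j\<bar> | j. j < N}"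
    using Max_in[OF fin ne] by auto
  have big: "\<bar>w 1 j0\<bar> > s" using j0 assms(3) by simp
  have keep: "w k j0 = w 1 j0" if "1 \<le> k" for k
    using that
  proof (induction k rule: dec_induct)
    case base then show ?case by simp
  next
    case (step n)
    then show ?case using stay[of n j0] j0(1) big by simp
  qed
  have j0out: "j0 \<notin> {j. j < N \<and> \<bar>w i j\<bar> \<le> s}"
    using keep[OF assms(5)] big by simp
  have sub1: "{j. j < N \<and> \<bar>w i j\<bar> \<le> s} \<subset> {..<N}"
  proof
    show "{j. j < N \<and> \<bar>w i j\<bar> \<le> s} \<subseteq> {..<N}" by blast
    show "{j. j < N \<and> \<bar>w i j\<bar> \<le> s} \<noteq> {..<N}" using j0out j0(1) by blast
  qed
  have sub2: "{j. j < N \<and> \<bar>w (i+1) j\<bar> \<le> s} \<subseteq> {j. j < N \<and> \<bar>w i j\<bar> \<le> s}"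
  proof
    fix j assume "j \<in> {j. j < N \<and> \<bar>w (i+1) j\<bar> \<le> s}"
    then show "j \<in> {j. j < N \<and> \<bar>w i j\<bar> \<le> s}"
    proof (cases "\<bar>w i j\<bar> \<le> s")
      case False
      then have "w (i+1) j = w i j" using stay[OF assms(5), of j] \<open>j \<in> _\<close> by simp
      then show ?thesis using False \<open>j \<in> _\<close> by simp
    qed (use \<open>j \<in> _\<close> in simp)
  qed
  have "card {j. j < N \<and> \<bar>w i j\<bar> \<le> s} < card {..<N}"
    using psubset_card_mono[OF _ sub1] by simp
  moreover have "card {j. j < N \<and> \<bar>w (i+1) j\<bar> \<le> s} \<le> card {j. j < N \<and> \<bar>w i j\<bar> \<le> s}"
    by (rule card_mono[OF _ sub2]) simp
  ultimately show ?thesis unfolding n_learned_def by simp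
qed

end
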